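(* Let $X$ be a locally compact Hausdorff space. In the category $\mathrm{SUM}(X)$, the one-point compactification $X+_{f_\infty}\{\infty\}$, where $f_\infty(F)=\emptyset$ if $F$ is compact and $f_\infty(F)=\{\infty\}$ otherwise, is a terminal object.
   Context: $\mathrm{Closed}(A)$ is the set of closed subsets of $A$; an admissible map $f:\mathrm{Closed}(X)\to\mathrm{Closed}(Y)$ satisfies $f(\emptyset)=\emptyset$ and preserves finite unions; $X+_fY$ is $X\sqcup Y$ with closed sets the $D$ such that $D\cap X$ is closed in $X$, $D\cap Y$ closed in $Y$ and $f(D\cap X)\subseteq D$. $\mathrm{SUM}(X)$ is the category whose objects are Hausdorff spaces of the form $X+_fY$ and whose morphisms are continuous maps of the form $\mathrm{id}+\phi:X+_{f_1}Y_1\to X+_{f_2}Y_2$ (identity on $X$, $\phi:Y_1\to Y_2$ on the remainders). *)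

theory Defs
  imports "HOL-Analysis.Analysis"
begin

definition admissible :: "'a topology \<Rightarrow> 'b topology \<Rightarrow> ('a set \<Rightarrow> 'b set) \<Rightarrow> bool" where
  "admissible X Y f \<longleftrightarrow>
     (\<forall>F. closedin X F \<longrightarrow> closedin Y (f F)) \<and>
     f {} = {} \<and>
     (\<forall>A B. closedin X A \<longrightarrow> closedin X B \<longrightarrow> f (A \<union> B) = f A \<union> f B)"

definition sum_closed :: "'a topology \<Rightarrow> ('a set \<Rightarrow> 'b set) \<Rightarrow> 'b topology \<Rightarrow> ('a + 'b) set \<Rightarrow> bool" where
  "sum_closed X f Y D \<longleftrightarrow>
     D \<subseteq> Inl ` topspace X \<union> Inr ` topspace Y \<and>
     closedin X (Inl -` D) \<and> closedin Y (Inr -` D) \<and>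
     Inr ` f (Inl -` D) \<subseteq> D"

text \<open>The space X +_f Y (a topology whenever f is admissible).\<close>
definition plus_top :: "'a topology \<Rightarrow> ('a set \<Rightarrow> 'b set) \<Rightarrow> 'b topology \<Rightarrow> ('a + 'b) topology" where
  "plus_top X f Y = topology (\<lambda>U. U \<subseteq> Inl ` topspace X \<union> Inr ` topspace Y \<and>
      sum_closed X f Y ((Inl ` topspace X \<union> Inr ` topspace Y) - U))"

definition id_plus :: "('b \<Rightarrow> 'c) \<Rightarrow> ('a + 'b) \<Rightarrow> ('a + 'c)" where
  "id_plus \<phi> z = (case z of Inl x \<Rightarrow> Inl x | Inr y \<Rightarrow> Inr (\<phi> y))"

definition SUM_obj :: "'a topology \<Rightarrow> ('a set \<Rightarrow> 'b set) \<Rightarrow> 'b topology \<Rightarrow> bool" where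
  "SUM_obj X f Y \<longleftrightarrow> admissible X Y f \<and> Hausdorff_space (plus_top X f Y)"

definition SUM_mor :: "'a topology \<Rightarrow> ('a set \<Rightarrow> 'b set) \<Rightarrow> 'b topology \<Rightarrow>
    ('a set \<Rightarrow> 'c set) \<Rightarrow> 'c topology \<Rightarrow> ('b \<Rightarrow> 'c) \<Rightarrow> bool" where
  "SUM_mor X f1 Y1 f2 Y2 \<phi> \<longleftrightarrow> continuous_map (plus_top X f1 Y1) (plus_top X f2 Y2) (id_plus \<phi>)"

text \<open>The one-point remainder {\<infinity>} (unit type) and f_\<infinity>.\<close>
definition point_top :: "unit topology" where
  "point_top = discrete_topology {()}"

definition f_infty :: "'a topology \<Rightarrow> 'a set \<Rightarrow> unit set" where
  "f_infty X F = (if compactin X F then {} else {()})"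

end

theory Submission
  imports Defs
begin

lemma adm_mono:
  assumes "admissible X Y f" "closedin X A" "closedin X B" "A \<subseteq> B"
  shows "f A \<subseteq> f B"
proof -
  have "f B = f (A \<union> B)" using assms(4) by (simp add: Un_absorb1)
  also have "\<dots> = f A \<union> f B" using assms unfolding admissible_def by blast
  finally show ?thesis by blast
qed

lemma open_char:
  assumes "U \<subseteq> Inl ` topspace X \<union> Inr ` topspace Y"
  shows "sum_closed X f Y ((Inl ` topspace X \<union> Inr ` topspace Y) - U) \<longleftrightarrow>
    openin X (Inl -` U) \<and> openin Y (Inr -` U) \<and>
    Inr ` f (topspace X - Inl -` U) \<subseteq> (Inl ` topspace X \<union> Inr ` topspace Y) - U"
proof -
  have 1: "Inl -` ((Inl ` topspace X \<union> Inr ` topspace Y) - U) = topspace X - Inl -` U" by auto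
  have 2: "Inr -` ((Inl ` topspace X \<union> Inr ` topspace Y) - U) = topspace Y - Inr -` U" by auto
  have 3: "Inl -` U \<subseteq> topspace X" "Inr -` U \<subseteq> topspace Y" using assms by auto
  show ?thesis unfolding sum_closed_def 1 2
    using 3 by (auto simp: closedin_def Diff_Diff_Int Int_absorb1)
qed

lemma plus_istop:
  assumes adm: "admissible X Y f"
  shows "istopology (\<lambda>U. U \<subseteq> Inl ` topspace X \<union> Inr ` topspace Y \<and>
      sum_closed X f Y ((Inl ` topspace X \<union> Inr ` topspace Y) - U))"
proof -
  let ?T = "Inl ` topspace X \<union> Inr ` topspace Y"
  have fcl: "\<And>A. closedin X A \<Longrightarrow> f A \<subseteq> topspace Y"
    using adm unfolding admissible_def using closedin_subset by blast
  have fU: "\<And>A B. closedin X A \<Longrightarrow> closedin X B \<Longrightarrow> f (A \<union> B) = f A \<union> f B"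
    using adm unfolding admissible_def by blast
  show ?thesis unfolding istopology_def
  proof (rule conjI; intro allI impI)
    fix S U
    assume S: "S \<subseteq> ?T \<and> sum_closed X f Y (?T - S)" and U: "U \<subseteq> ?T \<and> sum_closed X f Y (?T - U)"
    have S': "openin X (Inl -` S)" "openin Y (Inr -` S)" "Inr ` f (topspace X - Inl -` S) \<subseteq> ?T - S"
      using S open_char[of S X Y f] by auto
    have U': "openin X (Inl -` U)" "openin Y (Inr -` U)" "Inr ` f (topspace X - Inl -` U) \<subseteq> ?T - U"
      using U open_char[of U X Y f] by auto
    have e: "topspace X - Inl -` (S \<inter> U) = (topspace X - Inl -` S) \<union> (topspace X - Inl -` U)" by auto
    have "f (topspace X - Inl -` (S \<inter> U)) = f (topspace X - Inl -` S) \<union> f (topspace X - Inl -` U)"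
    proof -
      have c1: "closedin X (topspace X - Inl -` S)" using S'(1) by auto
      have c2: "closedin X (topspace X - Inl -` U)" using U'(1) by auto
      show ?thesis using fU[OF c1 c2] e by simp
    qed
    hence "Inr ` f (topspace X - Inl -` (S \<inter> U)) \<subseteq> ?T - (S \<inter> U)" using S'(3) U'(3) by auto
    moreover have "openin X (Inl -` (S \<inter> U))" "openin Y (Inr -` (S \<inter> U))"
      using S' U' by (auto simp: vimage_Int)
    moreover have "S \<inter> U \<subseteq> ?T" using S by auto
    ultimately show "S \<inter> U \<subseteq> ?T \<and> sum_closed X f Y (?T - (S \<inter> U))"
      using open_char[of "S \<inter> U" X Y f] by blast
  next
    fix K :: "('a + 'b) set set"
    assume K: "\<forall>U\<in>K. U \<subseteq> ?T \<and> sum_closed X f Y (?T - U)"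
    have K': "openin X (Inl -` U) \<and> openin Y (Inr -` U) \<and> Inr ` f (topspace X - Inl -` U) \<subseteq> ?T - U"
      if "U \<in> K" for U
    proof -
      have "U \<subseteq> ?T" "sum_closed X f Y (?T - U)" using K that by auto
      thus ?thesis using open_char[of U X Y f] by blast
    qed
    have sub: "\<Union>K \<subseteq> ?T" using K by auto
    have o1: "openin X (Inl -` \<Union>K)" unfolding vimage_Union by (intro openin_Union) (auto dest: K')
    have o2: "openin Y (Inr -` \<Union>K)" unfolding vimage_Union by (intro openin_Union) (auto dest: K')
    have "Inr ` f (topspace X - Inl -` \<Union>K) \<subseteq> ?T - \<Union>K"
    proof
      fix z :: "'a + 'b" assume "z \<in> Inr ` f (topspace X - Inl -` \<Union>K)"
      then obtain b where z: "z = Inr b" and b: "b \<in> f (topspace X - Inl -` \<Union>K)" by auto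
      have cl: "closedin X (topspace X - Inl -` \<Union>K)" using o1 by auto
      have "b \<in> topspace Y" using fcl[OF cl] b by auto
      moreover have "z \<notin> U" if "U \<in> K" for U
      proof -
        have "f (topspace X - Inl -` \<Union>K) \<subseteq> f (topspace X - Inl -` U)"
          by (rule adm_mono[OF adm cl]) (use K' that in auto)
        thus ?thesis using K'[OF that] b z by auto
      qed
      ultimately show "z \<in> ?T - \<Union>K" using z by auto
    qed
    thus "\<Union>K \<subseteq> ?T \<and> sum_closed X f Y (?T - \<Union>K)"
      using open_char[of "\<Union>K" X Y f] sub o1 o2 by blast
  qed
qed

lemma plus_top_open:
  assumes "admissible X Y f"
  shows "openin (plus_top X f Y) U \<longleftrightarrow> U \<subseteq> Inl ` topspace X \<union> Inr ` topspace Y \<and>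
      sum_closed X f Y ((Inl ` topspace X \<union> Inr ` topspace Y) - U)"
  unfolding plus_top_def using plus_istop[OF assms] by simp

lemma plus_top_topspace:
  assumes "admissible X Y f"
  shows "topspace (plus_top X f Y) = Inl ` topspace X \<union> Inr ` topspace Y"
proof -
  have "sum_closed X f Y {}" unfolding sum_closed_def using assms unfolding admissible_def by auto
  hence "openin (plus_top X f Y) (Inl ` topspace X \<union> Inr ` topspace Y)"
    using plus_top_open[OF assms] by auto
  moreover have "U \<subseteq> Inl ` topspace X \<union> Inr ` topspace Y" if "openin (plus_top X f Y) U" for U
    using that plus_top_open[OF assms] by auto
  ultimately show ?thesis unfolding topspace_def by blast
qed

lemma plus_top_closed:
  assumes "admissible X Y f"
  shows "closedin (plus_top X f Y) D \<longleftrightarrow> sum_closed X f Y D"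
proof -
  let ?T = "Inl ` topspace X \<union> Inr ` topspace Y"
  have "closedin (plus_top X f Y) D \<longleftrightarrow> D \<subseteq> ?T \<and> sum_closed X f Y (?T - (?T - D))"
    unfolding closedin_def plus_top_topspace[OF assms] plus_top_open[OF assms] by auto
  also have "\<dots> \<longleftrightarrow> sum_closed X f Y D"
    by (metis Diff_Diff_Int Int_absorb1 sum_closed_def)
  finally show ?thesis .
qed


lemma Inl_open:
  assumes adm: "admissible X Y f" and U: "openin X U"
  shows "openin (plus_top X f Y) (Inl ` U)"
proof -
  let ?T = "Inl ` topspace X \<union> Inr ` topspace Y"
  have sub: "Inl ` U \<subseteq> ?T" using openin_subset[OF U] by auto
  have a: "Inl -` Inl ` U = U" by auto
  have b: "Inr -` Inl ` U = {}" by auto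
  have c: "closedin X (topspace X - U)" using U by auto
  have "f (topspace X - U) \<subseteq> topspace Y"
    using adm c unfolding admissible_def using closedin_subset by blast
  hence "Inr ` f (topspace X - Inl -` Inl ` U) \<subseteq> ?T - Inl ` U" unfolding a by auto
  hence "sum_closed X f Y (?T - Inl ` U)"
    using open_char[of "Inl ` U" X Y f] sub U unfolding a b by auto
  thus ?thesis using plus_top_open[OF adm] sub by auto
qed

lemma Inl_cont:
  assumes adm: "admissible X Y f"
  shows "continuous_map X (plus_top X f Y) Inl"
  unfolding continuous_map_closedin
proof (intro conjI allI impI)
  show "Inl \<in> topspace X \<rightarrow> topspace (plus_top X f Y)"
    using plus_top_topspace[OF adm] by auto
next
  fix C assume "closedin (plus_top X f Y) C"
  hence "sum_closed X f Y C" using plus_top_closed[OF adm] by auto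
  hence "closedin X (Inl -` C)" unfolding sum_closed_def by auto
  moreover have "{x \<in> topspace X. Inl x \<in> C} = Inl -` C"
    using closedin_subset[OF calculation] by auto
  ultimately show "closedin X {x \<in> topspace X. Inl x \<in> C}" by simp
qed

lemma compact_f_empty:
  assumes obj: "SUM_obj X f Y" and C: "compactin X C"
  shows "f C = {}"
proof -
  have adm: "admissible X Y f" and H: "Hausdorff_space (plus_top X f Y)"
    using obj unfolding SUM_obj_def by auto
  have "compactin (plus_top X f Y) (Inl ` C)"
    by (rule image_compactin[OF C Inl_cont[OF adm]])
  hence "closedin (plus_top X f Y) (Inl ` C)" using compactin_imp_closedin[OF H] by auto
  hence "sum_closed X f Y (Inl ` C)" using plus_top_closed[OF adm] by auto
  moreover have e: "Inl -` Inl ` C = C" by auto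
  ultimately have "Inr ` f C \<subseteq> Inl ` C" unfolding sum_closed_def e by auto
  thus ?thesis by auto
qed

lemma adm_infty:
  assumes H: "Hausdorff_space X"
  shows "admissible X point_top (f_infty X)"
  unfolding admissible_def
proof (intro conjI allI impI)
  fix F show "closedin point_top (f_infty X F)"
    unfolding point_top_def f_infty_def by auto
next
  show "f_infty X {} = {}" unfolding f_infty_def by auto
next
  fix A B assume A: "closedin X A" and B: "closedin X B"
  have "compactin X (A \<union> B) \<longleftrightarrow> compactin X A \<and> compactin X B"
    using compactin_Un closed_compactin A B by blast
  thus "f_infty X (A \<union> B) = f_infty X A \<union> f_infty X B"
    unfolding f_infty_def by auto
qed

lemma infty_open:
  assumes H: "Hausdorff_space X" and K: "compactin X K"
  shows "openin (plus_top X (f_infty X) point_top)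
     (topspace (plus_top X (f_infty X) point_top) - Inl ` K)"
proof -
  have adm: "admissible X point_top (f_infty X)" by (rule adm_infty[OF H])
  have "closedin X K" using compactin_imp_closedin[OF H K] .
  moreover have e1: "Inl -` Inl ` K = K" and e2: "Inr -` Inl ` K = {}" by auto
  moreover have "f_infty X K = {}" using K unfolding f_infty_def by auto
  moreover have "K \<subseteq> topspace X" using K compactin_subset_topspace by auto
  ultimately have "sum_closed X (f_infty X) point_top (Inl ` K)"
    unfolding sum_closed_def e1 e2 by auto
  hence "closedin (plus_top X (f_infty X) point_top) (Inl ` K)"
    using plus_top_closed[OF adm] by auto
  thus ?thesis by auto
qed

lemma topspace_point: "topspace point_top = {()}"
  unfolding point_top_def by simp

lemma infty_Hausdorff:
  assumes L: "locally_compact_space X" and H: "Hausdorff_space X"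
  shows "Hausdorff_space (plus_top X (f_infty X) point_top)"
proof -
  let ?P = "plus_top X (f_infty X) point_top"
  have adm: "admissible X point_top (f_infty X)" by (rule adm_infty[OF H])
  have ts: "topspace ?P = Inl ` topspace X \<union> {Inr ()}"
    using plus_top_topspace[OF adm] topspace_point by auto
  have sep: "\<exists>U V. openin ?P U \<and> openin ?P V \<and> Inl a \<in> U \<and> Inr () \<in> V \<and> disjnt U V"
    if a: "a \<in> topspace X" for a
  proof -
    obtain U K where UK: "openin X U" "compactin X K" "a \<in> U" "U \<subseteq> K"
      using L a unfolding locally_compact_space_def by blast
    show ?thesis
      apply (rule exI[of _ "Inl ` U"], rule exI[of _ "topspace ?P - Inl ` K"])
      using Inl_open[OF adm UK(1)] infty_open[OF H UK(2)] UK(3,4) ts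
      by (auto simp: disjnt_def)
  qed
  show ?thesis unfolding Hausdorff_space_def
  proof (intro allI impI)
    fix x y assume xy: "x \<in> topspace ?P \<and> y \<in> topspace ?P \<and> x \<noteq> y"
    show "\<exists>U V. openin ?P U \<and> openin ?P V \<and> x \<in> U \<and> y \<in> V \<and> disjnt U V"
    proof (cases x)
      case (Inl a)
      show ?thesis
      proof (cases y)
        case (Inl b)
        have "a \<in> topspace X" "b \<in> topspace X" "a \<noteq> b" using xy ts \<open>x = Inl a\<close> Inl by auto
        then obtain U V where UV: "openin X U" "openin X V" "a \<in> U" "b \<in> V" "disjnt U V"
          using H unfolding Hausdorff_space_def by blast
        show ?thesis
          apply (rule exI[of _ "Inl ` U"], rule exI[of _ "Inl ` V"])
          using Inl_open[OF adm UV(1)] Inl_open[OF adm UV(2)] UV(3,4,5) \<open>x = Inl a\<close> Inl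
          by (auto simp: disjnt_def)
      next
        case (Inr u)
        have "a \<in> topspace X" using xy ts \<open>x = Inl a\<close> by auto
        thus ?thesis using sep \<open>x = Inl a\<close> Inr by auto
      qed
    next
      case (Inr u)
      then obtain a where "y = Inl a" "a \<in> topspace X" using xy ts by auto
      then obtain U V where "openin ?P U \<and> openin ?P V \<and> Inl a \<in> U \<and> Inr () \<in> V \<and> disjnt U V"
        using sep by blast
      thus ?thesis using \<open>y = Inl a\<close> Inr by (metis disjnt_sym old.unit.exhaust)
    qed
  qed
qed

theorem mainTheorem15:
  fixes X :: "'a topology"
  assumes "locally_compact_space X" and "Hausdorff_space X"
  shows "SUM_obj X (f_infty X) point_top \<and>
    (\<forall>(f :: 'a set \<Rightarrow> 'b set) (Y :: 'b topology). SUM_obj X f Y \<longrightarrow>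
        (\<exists>!\<phi>. \<phi> \<in> topspace Y \<rightarrow>\<^sub>E topspace point_top \<and>
               SUM_mor X f Y (f_infty X) point_top \<phi>))"
proof (intro conjI allI impI)
  have adm: "admissible X point_top (f_infty X)" by (rule adm_infty[OF assms(2)])
  show "SUM_obj X (f_infty X) point_top"
    unfolding SUM_obj_def using adm infty_Hausdorff[OF assms] by auto
  fix f :: "'a set \<Rightarrow> 'b set" and Y :: "'b topology"
  assume obj: "SUM_obj X f Y"
  have admf: "admissible X Y f" using obj unfolding SUM_obj_def by auto
  define \<phi>0 where "\<phi>0 = (\<lambda>y\<in>topspace Y. ())"
  have ext: "\<phi>0 \<in> topspace Y \<rightarrow>\<^sub>E topspace point_top"
    unfolding \<phi>0_def topspace_point by auto
  have mor: "SUM_mor X f Y (f_infty X) point_top \<phi>0"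
    unfolding SUM_mor_def continuous_map_closedin
  proof (intro conjI allI impI)
    show "id_plus \<phi>0 \<in> topspace (plus_top X f Y) \<rightarrow> topspace (plus_top X (f_infty X) point_top)"
      unfolding plus_top_topspace[OF admf] plus_top_topspace[OF adm] topspace_point
      by (auto simp: id_plus_def)
  next
    fix D assume "closedin (plus_top X (f_infty X) point_top) D"
    hence D: "sum_closed X (f_infty X) point_top D" using plus_top_closed[OF adm] by auto
    let ?P = "{x \<in> topspace (plus_top X f Y). id_plus \<phi>0 x \<in> D}"
    have tsY: "topspace (plus_top X f Y) = Inl ` topspace X \<union> Inr ` topspace Y"
      by (rule plus_top_topspace[OF admf])
    have DT: "D \<subseteq> Inl ` topspace X \<union> Inr ` {()}" using D unfolding sum_closed_def topspace_point by auto
    have p1: "Inl -` ?P = Inl -` D" using DT unfolding tsY by (auto simp: id_plus_def)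
    have p2: "Inr -` ?P = (if Inr () \<in> D then topspace Y else {})"
      unfolding tsY by (auto simp: id_plus_def \<phi>0_def)
    have cD: "closedin X (Inl -` D)" using D unfolding sum_closed_def by auto
    have fsub: "f (Inl -` D) \<subseteq> topspace Y"
      using admf cD unfolding admissible_def using closedin_subset by blast
    have "Inr ` f (Inl -` ?P) \<subseteq> ?P"
    proof (cases "Inr () \<in> D")
      case True
      thus ?thesis unfolding p1 using fsub by (auto simp: id_plus_def \<phi>0_def tsY)
    next
      case False
      have "Inr ` f_infty X (Inl -` D) \<subseteq> D" using D unfolding sum_closed_def by auto
      hence "f_infty X (Inl -` D) = {}" using False by auto
      hence "compactin X (Inl -` D)" unfolding f_infty_def by (auto split: if_splits)
      hence "f (Inl -` D) = {}" using compact_f_empty[OF obj] by auto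
      thus ?thesis unfolding p1 by auto
    qed
    hence "sum_closed X f Y ?P" unfolding sum_closed_def p1 p2 using cD tsY by auto
    thus "closedin (plus_top X f Y) ?P" using plus_top_closed[OF admf] by auto
  qed
  show "\<exists>!\<phi>. \<phi> \<in> topspace Y \<rightarrow>\<^sub>E topspace point_top \<and> SUM_mor X f Y (f_infty X) point_top \<phi>"
  proof (rule ex1I[of _ \<phi>0])
    show "\<phi>0 \<in> topspace Y \<rightarrow>\<^sub>E topspace point_top \<and> SUM_mor X f Y (f_infty X) point_top \<phi>0"
      using ext mor by auto
  next
    fix \<psi> :: "'b \<Rightarrow> unit" show "\<psi> = \<phi>0" by (rule HOL.ext) simp
  qed
qed

end
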